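(* Let $\Gamma$ be a discrete group acting on the closed disk $\mathbb D^m$ and let $\Delta$ be a closed $\Gamma$-invariant subset of $S^{m-1}=\partial\mathbb D^m$ such that the pair $(\mathbb D^m,\Delta)$ satisfies the properties of condition $( *_\Delta)$. Then there is a second $\Gamma$-space $(\mathbb D^{m+1},\Delta)$, where $\Delta$ (by abuse of notation) is a closed subset of $\partial\mathbb D^{m+1}$ identified $\Gamma$-equivariantly with $\Delta$, which also satisfies the properties of condition $( *_\Delta)$, together with a continuous $\Gamma$-equivariant surjection $\mathbb D^m\times I\to\mathbb D^{m+1}$ (with $\Gamma$ acting trivially on $I$) mapping $\Delta\times I$ to $\Delta$ and mapping $(\mathbb D^m-\Delta)\times I$ homeomorphically onto $\mathbb D^{m+1}-\Delta$.
   Context: A pair $(\mathbb D^n,\Delta)$ with an action of $\Gamma$ on $\mathbb D^n$ and $\Delta$ a closed subset of $S^{n-1}=\partial\mathbb D^n$ satisfies the properties of condition $( *_\Delta)$ if: (i) $\Gamma$ acts properly discontinuously and cocompactly on $\mathbb D^n-\Delta$; (ii) for each compact subset $K$ of $\mathbb D^n-\Delta$ and each $\epsilon>0$ there exists $\delta=\delta(K,\epsilon)>0$ such that for each $\gamma\in\Gamma$, if $d(\gamma K,\Delta)<\delta$ then $\mathrm{diam}(\gamma K)<\epsilon$ (distances in a fixed metric on $\mathbb D^n$). *)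

theory Defs
  imports "HOL-Analysis.Analysis" "HOL-Algebra.Group"
begin

text \<open>Each element then acts by a homeomorphism of D (its inverse acting by the inverse).
  The group is discrete (no topology on G is used).\<close>
definition group_action_on :: "('g, 'm) monoid_scheme \<Rightarrow> ('g \<Rightarrow> 'a::topological_space \<Rightarrow> 'a) \<Rightarrow> 'a set \<Rightarrow> bool" where
  "group_action_on G act D \<longleftrightarrow> group G \<and>
     (\<forall>g\<in>carrier G. continuous_on D (act g) \<and> act g ` D \<subseteq> D) \<and>
     (\<forall>x\<in>D. act \<one>\<^bsub>G\<^esub> x = x) \<and>
     (\<forall>g\<in>carrier G. \<forall>h\<in>carrier G. \<forall>x\<in>D. act (g \<otimes>\<^bsub>G\<^esub> h) x = act g (act h x))"

definition properly_discontinuous_on :: "('g, 'm) monoid_scheme \<Rightarrow> ('g \<Rightarrow> 'a::topological_space \<Rightarrow> 'a) \<Rightarrow> 'a set \<Rightarrow> bool" where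
  "properly_discontinuous_on G act X \<longleftrightarrow>
     (\<forall>K. compact K \<and> K \<subseteq> X \<longrightarrow> finite {g \<in> carrier G. act g ` K \<inter> K \<noteq> {}})"

definition cocompact_on :: "('g, 'm) monoid_scheme \<Rightarrow> ('g \<Rightarrow> 'a::topological_space \<Rightarrow> 'a) \<Rightarrow> 'a set \<Rightarrow> bool" where
  "cocompact_on G act X \<longleftrightarrow> (\<exists>K. compact K \<and> K \<subseteq> X \<and> X \<subseteq> (\<Union>g\<in>carrier G. act g ` K))"

text \<open>Condition (*_Delta) for the pair (D, Delta), D a closed disk, with the Euclidean metric.
  "d(gK, Delta) < delta" is written out as the existence of points at distance < delta
  (the infimum of distances is < delta iff some pair has distance < delta).\<close>
definition star_condition :: "('g, 'm) monoid_scheme \<Rightarrow> ('g \<Rightarrow> 'a::metric_space \<Rightarrow> 'a) \<Rightarrow> 'a set \<Rightarrow> 'a set \<Rightarrow> bool" where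
  "star_condition G act D \<Delta> \<longleftrightarrow>
     properly_discontinuous_on G act (D - \<Delta>) \<and> cocompact_on G act (D - \<Delta>) \<and>
     (\<forall>K \<epsilon>. compact K \<and> K \<subseteq> D - \<Delta> \<and> \<epsilon> > 0 \<longrightarrow>
        (\<exists>\<delta>>0. \<forall>g\<in>carrier G.
           (\<exists>x\<in>act g ` K. \<exists>y\<in>\<Delta>. dist x y < \<delta>) \<longrightarrow> diameter (act g ` K) < \<epsilon>))"

end

theory Submission
  imports Defs
begin


definition coneD :: "'a::real_normed_vector set \<Rightarrow> 'a set" where
  "coneD D = insert 0 {c *\<^sub>R y | c y. 0 \<le> c \<and> y \<in> D}"
definition EE :: "'a::real_normed_vector set \<Rightarrow> 'a \<Rightarrow> real" where
  "EE D x = infdist x (coneD D)"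

lemma coneD_scale: "a \<in> coneD D \<Longrightarrow> 0 \<le> c \<Longrightarrow> c *\<^sub>R a \<in> coneD D"
  unfolding coneD_def by (auto, metis mult_nonneg_nonneg scaleR_scaleR)

lemma infdist_ge_lemma: "A \<noteq> {} \<Longrightarrow> (\<And>a. a \<in> A \<Longrightarrow> d \<le> dist x a) \<Longrightarrow> d \<le> infdist x A"
  by (simp add: infdist_def cINF_greatest)

lemma EE_le_scale:
  assumes "c > 0" shows "EE D (c *\<^sub>R x) \<le> c * EE D x"
proof -
  have ne: "coneD D \<noteq> {}" by (simp add: coneD_def)
  have "EE D (c *\<^sub>R x) / c \<le> infdist x (coneD D)"
  proof (rule infdist_ge_lemma[OF ne])
    fix a assume a: "a \<in> coneD D"
    have "EE D (c *\<^sub>R x) \<le> dist (c *\<^sub>R x) (c *\<^sub>R a)"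
      unfolding EE_def using coneD_scale[OF a] assms by (intro infdist_le) auto
    also have "\<dots> = c * dist x a" using assms
      by (simp add: dist_norm flip: scaleR_diff_right)
    finally show "EE D (c *\<^sub>R x) / c \<le> dist x a" using assms by (simp add: field_simps)
  qed
  then show ?thesis using assms by (simp add: EE_def field_simps)
qed

lemma EE_scale:
  assumes "c \<ge> 0" shows "EE D (c *\<^sub>R x) = c * EE D x"
proof (cases "c = 0")
  case True
  then show ?thesis by (simp add: EE_def coneD_def)
next
  case False
  then have c: "c > 0" using assms by auto
  have "EE D x = EE D (inverse c *\<^sub>R (c *\<^sub>R x))" using c by simp
  also have "\<dots> \<le> inverse c * EE D (c *\<^sub>R x)" using c by (intro EE_le_scale) auto
  finally have "c * EE D x \<le> EE D (c *\<^sub>R x)" using c by (simp add: field_simps)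
  with EE_le_scale[OF c, of D x] show ?thesis by linarith
qed

lemma EE_nonneg: "0 \<le> EE D x" by (simp add: EE_def infdist_nonneg)

lemma EE_le_norm: "EE D x \<le> norm x"
  unfolding EE_def using infdist_le[of 0 "coneD D" x] by (simp add: coneD_def)

lemma EE_cont: "continuous_on S (EE D)"
  unfolding EE_def by (intro continuous_intros)

lemma EE_zero: "y \<in> D \<Longrightarrow> EE D y = 0"
  unfolding EE_def coneD_def by (rule infdist_zero) (auto intro!: exI[of _ 1])

lemma EE_pos:
  fixes x :: "'a::real_normed_vector"
  assumes "closed D" "D \<subseteq> sphere 0 1" "norm x = 1" "x \<notin> D"
  shows "EE D x > 0"
proof (cases "D = {}")
  case True
  then have "coneD D = {0}" by (simp add: coneD_def)
  then show ?thesis using assms by (simp add: EE_def)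
next
  case False
  have ip: "infdist x D > 0" using infdist_pos_not_in_closed assms False by blast
  have "min 1 (infdist x D / 2) \<le> EE D x"
    unfolding EE_def
  proof (rule infdist_ge_lemma)
    show "coneD D \<noteq> {}" by (simp add: coneD_def)
    fix a assume "a \<in> coneD D"
    then consider "a = 0" | c y where "a = c *\<^sub>R y" "0 \<le> c" "y \<in> D" unfolding coneD_def by auto
    then show "min 1 (infdist x D / 2) \<le> dist x a"
    proof cases
      case 1 then show ?thesis using assms by simp
    next
      case 2
      have ny: "norm y = 1" using 2 assms by auto
      have "c *\<^sub>R y - y = (c - 1) *\<^sub>R y" by (simp add: algebra_simps)
      then have "dist (c *\<^sub>R y) y = \<bar>c - 1\<bar>"
        by (simp add: dist_norm ny)
      also have "\<bar>c - 1\<bar> = \<bar>norm (c *\<^sub>R y) - norm x\<bar>" using 2 ny assms by simp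
      also have "\<dots> \<le> dist x (c *\<^sub>R y)"
        by (metis abs_minus_commute dist_norm norm_triangle_ineq3)
      finally have "dist x y \<le> 2 * dist x a" using dist_triangle[of x y "c *\<^sub>R y"] 2(1) by simp
      moreover have "infdist x D \<le> dist x y" using 2 by (simp add: infdist_le)
      ultimately show ?thesis by linarith
    qed
  qed
  then show ?thesis using ip by linarith
qed

definition psi :: "'a::real_normed_vector set \<Rightarrow> 'a \<Rightarrow> real" where
  "psi D x = 1 - norm x + EE D x"
definition NN :: "'a::real_normed_vector set \<Rightarrow> 'a \<times> real \<Rightarrow> real" where
  "NN D p = max (norm (fst p)) (\<bar>snd p\<bar> + norm (fst p) - EE D (fst p))"
definition QQ :: "'a::real_normed_vector set \<Rightarrow> 'a \<times> real \<Rightarrow> 'a \<times> real" where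
  "QQ D p = (if p = 0 then 0 else (NN D p / norm p) *\<^sub>R p)"

lemma NN_scale:
  assumes "0 \<le> c" shows "NN D (c *\<^sub>R p) = c * NN D p"
proof -
  have "NN D (c *\<^sub>R p) = max (c * norm (fst p)) (c * (\<bar>snd p\<bar> + norm (fst p) - EE D (fst p)))"
    using assms by (simp add: NN_def EE_scale abs_mult algebra_simps)
  also have "\<dots> = c * NN D p" using assms by (simp add: NN_def max_mult_distrib_left)
  finally show ?thesis .
qed

lemma NN_ge1: "norm (fst p) \<le> NN D p" by (simp add: NN_def)
lemma NN_ge2: "\<bar>snd p\<bar> \<le> NN D p" using EE_le_norm[of D "fst p"] by (simp add: NN_def)
lemma NN_le: "NN D p \<le> 2 * norm p"
proof -
  have "norm (fst p) \<le> norm p" "\<bar>snd p\<bar> \<le> norm p"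
    by (metis norm_fst_le norm_snd_le prod.collapse real_norm_def)+
  then show ?thesis using EE_nonneg[of D "fst p"] by (simp add: NN_def)
qed
lemma NN_pos: "p \<noteq> 0 \<Longrightarrow> NN D p > 0"
  using NN_ge1[of p D] NN_ge2[of p D] by (cases p) (auto simp: zero_prod_def intro: less_le_trans[of 0 "norm (fst p)"])
lemma NN_zero: "NN D 0 = 0"
  using NN_le[of D 0] NN_ge1[of 0 D] by simp

lemma norm_QQ: "norm (QQ D p) = NN D p"
  using NN_pos[of p D] by (auto simp: QQ_def NN_zero)

lemma NN_cont: "continuous_on S (NN D)"
  unfolding NN_def by (intro continuous_intros EE_cont[THEN continuous_on_compose2[where g="EE D"]]) auto

lemma QQ_cont: "continuous_on S (QQ D)"
proof -
  have "continuous (at p) (QQ D)" for p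
  proof (cases "p = 0")
    case True
    have "(QQ D \<longlongrightarrow> 0) (at 0)"
    proof (rule Lim_null_comparison)
      show "\<forall>\<^sub>F x in at 0. norm (QQ D x) \<le> 2 * norm x" using NN_le[of D] by (simp add: norm_QQ always_eventually)
      show "((\<lambda>x. 2 * norm x) \<longlongrightarrow> 0) (at (0::'a \<times> real))"
        by (intro tendsto_eq_intros) auto
    qed
    then show ?thesis using True by (simp add: continuous_at QQ_def)
  next
    case False
    have c: "continuous_on (-{0}) (\<lambda>p. (NN D p / norm p) *\<^sub>R p)"
      by (intro continuous_intros NN_cont) auto
    have "continuous_on (-{0}) (QQ D)"
      by (rule continuous_on_eq[OF c]) (auto simp: QQ_def)
    then show ?thesis using False
      by (meson ComplI continuous_on_eq_continuous_at open_Compl closed_singleton singletonD)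
  qed
  then show ?thesis by (simp add: continuous_at_imp_continuous_on)
qed

definition ff :: "'a::real_normed_vector set \<Rightarrow> 'a \<times> real \<Rightarrow> 'a \<times> real" where
  "ff D xt = QQ D (fst xt, (2 * snd xt - 1) * psi D (fst xt))"
definition fi :: "'a::real_normed_vector set \<Rightarrow> 'a \<times> real \<Rightarrow> 'a \<times> real" where
  "fi D q = (if q = 0 then (0, 1/2) else
     (let p = (norm q / NN D q) *\<^sub>R q in (fst p, (snd p / psi D (fst p) + 1) / 2)))"

lemma EE_0: "EE D 0 = 0" using EE_le_norm[of D 0] EE_nonneg[of D 0] by simp
lemma psi_0: "psi D 0 = 1" by (simp add: psi_def EE_0)

lemma psi_nonneg: "norm x \<le> 1 \<Longrightarrow> 0 \<le> psi D x"
  using EE_nonneg[of D x] by (simp add: psi_def)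

lemma psi_pos:
  assumes "closed D" "D \<subseteq> sphere 0 1" "norm x \<le> 1" "x \<notin> D"
  shows "0 < psi D x"
proof (cases "norm x = 1")
  case True then show ?thesis using EE_pos[OF assms(1,2) True assms(4)] by (simp add: psi_def)
next
  case False then show ?thesis using assms(3) EE_nonneg[of D x] by (simp add: psi_def)
qed

lemma psi_D: "D \<subseteq> sphere 0 1 \<Longrightarrow> y \<in> D \<Longrightarrow> psi D y = 0"
  by (auto simp: psi_def EE_zero)

lemma ff_D:
  assumes "D \<subseteq> sphere 0 1" "y \<in> D" shows "ff D (y, t) = (y, 0)"
proof -
  have ny: "norm y = 1" using assms by auto
  have "NN D (y, 0) = 1" using ny EE_zero[OF assms(2)] by (simp add: NN_def)
  moreover have "(y, 0::real) \<noteq> 0" using ny by (auto simp: zero_prod_def)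
  ultimately show ?thesis using ny psi_D[OF assms]
    by (simp add: ff_def QQ_def norm_Pair)
qed

lemma ff_cont: "continuous_on S (ff D)"
proof -
  have "continuous_on S (\<lambda>xt. (fst xt, (2 * snd xt - 1) * psi D (fst xt)))"
    unfolding psi_def
    by (intro continuous_intros EE_cont[THEN continuous_on_compose2[where g="EE D"]]) auto
  then show ?thesis unfolding ff_def
    by (rule continuous_on_compose2[OF QQ_cont]) auto
qed

lemma NN_P_le:
  assumes "norm x \<le> 1" "\<bar>s\<bar> \<le> 1"
  shows "NN D (x, s * psi D x) \<le> 1"
proof -
  have "\<bar>s * psi D x\<bar> \<le> psi D x" using psi_nonneg[OF assms(1), of D] assms(2)
    by (simp add: abs_mult mult_left_le_one_le)
  then show ?thesis using assms(1) by (simp add: NN_def psi_def)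
qed

lemma ff_in:
  assumes "norm x \<le> 1" "0 \<le> t" "t \<le> 1"
  shows "norm (ff D (x, t)) \<le> 1"
  using NN_P_le[OF assms(1), of "2 * t - 1" D] assms by (simp add: ff_def norm_QQ)

lemma fi_ff:
  assumes D: "closed D" "D \<subseteq> sphere 0 1" and x: "norm x \<le> 1" "x \<notin> D" and t: "0 \<le> t" "t \<le> 1"
  shows "fi D (ff D (x, t)) = (x, t)"
proof -
  define P where "P = (x, (2 * t - 1) * psi D x)"
  have ps: "psi D x > 0" using psi_pos[OF D x] .
  show ?thesis
  proof (cases "P = 0")
    case True
    then have "x = 0" by (simp add: P_def zero_prod_def)
    with True have "t = 1/2" by (simp add: P_def zero_prod_def psi_0)
    then show ?thesis using True \<open>x = 0\<close> by (simp add: fi_def ff_def P_def QQ_def)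
  next
    case False
    define lam where "lam = NN D P / norm P"
    have lam: "lam > 0" using NN_pos[OF False] False by (simp add: lam_def)
    have q: "ff D (x, t) = lam *\<^sub>R P" using False by (simp add: ff_def P_def QQ_def lam_def)
    have qn: "lam *\<^sub>R P \<noteq> 0" using lam False by simp
    have "norm (lam *\<^sub>R P) / NN D (lam *\<^sub>R P) = norm P / NN D P"
      using lam NN_pos[OF False, of D] by (simp add: NN_scale field_simps)
    then have "(norm (lam *\<^sub>R P) / NN D (lam *\<^sub>R P)) *\<^sub>R (lam *\<^sub>R P) = P"
      using lam NN_pos[OF False, of D] False by (simp add: lam_def)
    then show ?thesis using q qn ps by (simp add: fi_def Let_def P_def)
  qed
qed

lemma ff_fi:
  assumes D: "closed D" "D \<subseteq> sphere 0 1" and q: "norm q \<le> 1" "q \<notin> (\<lambda>y. (y, 0)) ` D"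
  shows "fst (fi D q) \<notin> D \<and> norm (fst (fi D q)) \<le> 1 \<and> snd (fi D q) \<in> {0..1} \<and> ff D (fi D q) = q"
proof (cases "q = 0")
  case True
  have "0 \<notin> D" using D by auto
  then show ?thesis using True by (simp add: fi_def ff_def QQ_def zero_prod_def)
next
  case False
  define lam where "lam = norm q / NN D q"
  have lam: "lam > 0" using NN_pos[OF False] False by (simp add: lam_def)
  define p where "p = lam *\<^sub>R q"
  have fi: "fi D q = (fst p, (snd p / psi D (fst p) + 1) / 2)"
    using False by (simp add: fi_def p_def lam_def Let_def)
  have Np: "NN D p = norm q" using lam NN_pos[OF False, of D]
    by (simp add: p_def NN_scale lam_def)
  have pn: "p \<noteq> 0" using lam False by (simp add: p_def)
  have x1: "norm (fst p) \<le> 1" using NN_ge1[of p D] Np q by simp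
  have sig: "\<bar>snd p\<bar> + norm (fst p) - EE D (fst p) \<le> 1"
    using Np q by (simp add: NN_def)
  have xD: "fst p \<notin> D"
  proof
    assume xD: "fst p \<in> D"
    then have n1: "norm (fst p) = 1" and e0: "EE D (fst p) = 0" using D EE_zero by auto
    then have s0: "snd p = 0" using sig by simp
    have "NN D p = 1" using n1 e0 s0 by (simp add: NN_def)
    then have nq: "norm q = 1" using Np by simp
    have "norm p = 1" using n1 s0 by (metis norm_Pair prod.collapse real_norm_def abs_zero power2_eq_square mult_zero_left add_0_right real_sqrt_one power_one)
    then have "lam = 1" using nq lam by (simp add: p_def)
    then have "q = (fst p, 0)" using s0 by (simp add: p_def prod_eq_iff)
    then show False using q(2) xD by auto
  qed
  have ps: "psi D (fst p) > 0" using psi_pos[OF D x1 xD] .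
  have sp: "\<bar>snd p\<bar> \<le> psi D (fst p)" using sig by (simp add: psi_def)
  then have s1: "\<bar>snd p / psi D (fst p)\<bar> \<le> 1" using ps by (simp add: abs_divide divide_le_eq_1)
  have t01: "snd (fi D q) \<in> {0..1}" using s1 unfolding fi abs_le_iff by simp
  have "(2 * ((snd p / psi D (fst p) + 1) / 2) - 1) * psi D (fst p) = snd p"
    using ps by (simp add: field_simps)
  then have "ff D (fi D q) = QQ D p" by (simp add: fi ff_def)
  also have "\<dots> = q" using pn lam Np by (simp add: QQ_def p_def)
  finally show ?thesis using t01 xD x1 by (simp add: fi)
qed

lemma ff_notDl:
  assumes D: "closed D" "D \<subseteq> sphere 0 1" and x: "norm x \<le> 1" "x \<notin> D" and t: "0 \<le> t" "t \<le> 1"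
  shows "ff D (x, t) \<notin> (\<lambda>y. (y, 0)) ` D"
proof
  assume "ff D (x, t) \<in> (\<lambda>y. (y, 0)) ` D"
  then obtain y where y: "y \<in> D" "ff D (x, t) = (y, 0)" by auto
  have "fi D (y, 0) = (y, 1/2)"
  proof -
    have ny: "norm y = 1" using y D by auto
    have "NN D (y, 0) = 1" using ny EE_zero[OF y(1)] by (simp add: NN_def)
    moreover have "(y, 0::real) \<noteq> 0" using ny by (auto simp: zero_prod_def)
    ultimately show ?thesis using ny by (simp add: fi_def norm_Pair)
  qed
  then show False using fi_ff[OF D x t] y x by simp
qed



lemma infdist_ge_lemma': "A \<noteq> {} \<Longrightarrow> (\<And>a. a \<in> A \<Longrightarrow> d \<le> dist x a) \<Longrightarrow> d \<le> infdist x A"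
  by (simp add: infdist_def cINF_greatest)

lemma infdist_lessE:
  assumes "infdist x A < d" "A \<noteq> {}" obtains a where "a \<in> A" "dist x a < d"
  using infdist_ge_lemma'[of A d x] assms by force

lemma quot_cont:
  fixes f :: "'a::metric_space \<Rightarrow> 'b::metric_space" and k :: "'b \<Rightarrow> 'c::metric_space"
  assumes "compact S" "continuous_on S f" "f ` S = T" "continuous_on S (\<lambda>x. k (f x))"
  shows "continuous_on T k"
  unfolding continuous_on_closed
proof (intro allI impI)
  fix C assume C: "closedin (top_of_set (k ` T)) C"
  have im: "(\<lambda>x. k (f x)) ` S = k ` T" using assms(3) by auto
  have cl: "closedin (top_of_set S) (S \<inter> (\<lambda>x. k (f x)) -` C)"
    using continuous_on_imp_closedin[OF assms(4)] C im by simp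
  have cp: "compact (f ` (S \<inter> (\<lambda>x. k (f x)) -` C))"
    using closedin_compact[OF assms(1) cl] continuous_on_subset[OF assms(2)]
    by (meson compact_continuous_image inf_le1)
  have eq: "T \<inter> k -` C = f ` (S \<inter> (\<lambda>x. k (f x)) -` C)" using assms(3) by auto
  show "closedin (top_of_set T) (T \<inter> k -` C)"
    unfolding eq by (rule closed_subset) (use assms(3) cp compact_imp_closed in auto)
qed

lemma homeo_part:
  fixes f :: "'a::metric_space \<Rightarrow> 'b::metric_space"
  assumes "compact S0" "continuous_on S0 f" "f ` S0 = D'" "A \<subseteq> S0" "inj_on f A"
    "f ` (S0 - A) \<subseteq> D2" "f ` A \<inter> D2 = {}"
  shows "\<exists>f'. homeomorphism A (D' - D2) f f'"
proof -
  have im: "f ` A = D' - D2" using assms(3-7) by blast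
  obtain g where "homeomorphism A (D' - D2) f g"
  proof (rule homeomorphism_injective_closed_map[OF continuous_on_subset[OF assms(2,4)] im assms(5)])
    fix U assume "closedin (top_of_set A) U"
    then obtain Cl where Cl: "closed Cl" "U = A \<inter> Cl" by (auto simp: closedin_closed)
    have eq: "f ` U = (D' - D2) \<inter> f ` (S0 \<inter> Cl)" using Cl assms(3-7) by blast
    have "compact (f ` (S0 \<inter> Cl))"
      using assms(1,2) Cl(1) by (meson compact_Int_closed compact_continuous_image continuous_on_subset inf_le1)
    then show "closedin (top_of_set (D' - D2)) (f ` U)"
      unfolding eq by (simp add: closedin_closed_Int compact_imp_closed)
  qed
  then show ?thesis by blast
qed

lemma transfer:
  fixes act :: "'g \<Rightarrow> 'a::euclidean_space \<Rightarrow> 'a" and f :: "'a \<times> real \<Rightarrow> 'b::euclidean_space"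
    and h :: "'a \<Rightarrow> 'b"
  assumes ga: "group_action_on G act D"
    and cD: "compact D" and clD: "closed \<Delta>" and DD: "\<Delta> \<subseteq> D"
    and inv: "\<forall>g\<in>carrier G. act g ` \<Delta> \<subseteq> \<Delta>"
    and st: "star_condition G act D \<Delta>"
    and fc: "continuous_on (D \<times> {0..1}) f"
    and fim: "f ` (D \<times> {0..1}) = D'"
    and fh: "\<And>x t. x \<in> \<Delta> \<Longrightarrow> t \<in> {0..1} \<Longrightarrow> f (x, t) = h x"
    and hinj: "inj_on h \<Delta>"
    and DD': "\<Delta>' = h ` \<Delta>"
    and finj: "inj_on f ((D - \<Delta>) \<times> {0..1})"
    and fdisj: "\<And>x t. x \<in> D - \<Delta> \<Longrightarrow> t \<in> {0..1} \<Longrightarrow> f (x, t) \<notin> \<Delta>'"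
  shows "\<exists>act'. group_action_on G act' D' \<and> (\<forall>g\<in>carrier G. act' g ` \<Delta>' \<subseteq> \<Delta>') \<and>
     star_condition G act' D' \<Delta>' \<and> (\<forall>g\<in>carrier G. \<forall>x\<in>\<Delta>. h (act g x) = act' g (h x)) \<and>
     (\<forall>g\<in>carrier G. \<forall>x\<in>D. \<forall>t\<in>{0..1}. f (act g x, t) = act' g (f (x, t)))"
proof -
  define S where "S = D \<times> {0..1::real}"
  define fi where "fi = inv_into S f"
  define act' where "act' g q = f (act g (fst (fi q)), snd (fi q))" for g q
  have grp: "group G" using ga by (simp add: group_action_on_def)
  have actD: "act g x \<in> D" if "g \<in> carrier G" "x \<in> D" for g x
    using ga that by (auto simp: group_action_on_def)
  have actc: "continuous_on D (act g)" if "g \<in> carrier G" for g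
    using ga that by (auto simp: group_action_on_def)
  have act1: "act \<one>\<^bsub>G\<^esub> x = x" if "x \<in> D" for x
    using ga that by (auto simp: group_action_on_def)
  have actm: "act (g \<otimes>\<^bsub>G\<^esub> k) x = act g (act k x)" if "g \<in> carrier G" "k \<in> carrier G" "x \<in> D" for g k x
    using ga that by (auto simp: group_action_on_def)
  have actDD: "act g x \<in> D - \<Delta>" if g: "g \<in> carrier G" and x: "x \<in> D - \<Delta>" for g x
  proof -
    have ig: "inv\<^bsub>G\<^esub> g \<in> carrier G" using grp g by simp
    have "act (inv\<^bsub>G\<^esub> g) (act g x) = x"
      using actm[OF ig g, of x] x grp g act1 by (simp add: group.l_inv)
    moreover have "act (inv\<^bsub>G\<^esub> g) (act g x) \<in> \<Delta>" if "act g x \<in> \<Delta>"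
      using inv ig that by auto
    ultimately show ?thesis using x actD g by auto
  qed
  have key: "act' g (f (x, t)) = f (act g x, t)" if g: "g \<in> carrier G" and x: "x \<in> D" and t: "t \<in> {0..1}" for g x t
  proof -
    have xt: "(x, t) \<in> S" using x t by (simp add: S_def)
    obtain x' t' where e: "fi (f (x, t)) = (x', t')" by fastforce
    have x't': "(x', t') \<in> S" using e xt unfolding fi_def by (metis imageI inv_into_into)
    have fe: "f (x', t') = f (x, t)" using e xt unfolding fi_def by (metis f_inv_into_f imageI)
    show ?thesis
    proof (cases "x \<in> \<Delta>")
      case True
      have "f (x, t) \<in> \<Delta>'" using True t fh DD' by auto
      then have x'D: "x' \<in> \<Delta>" using fdisj[of x' t'] x't' fe by (auto simp: S_def)
      then have "h x' = h x" using fe fh True t x't' by (auto simp: S_def)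
      then have "x' = x" using hinj x'D True by (meson inj_onD)
      moreover have "act g x \<in> \<Delta>" using inv g True by auto
      ultimately show ?thesis using e fh t x't' by (simp add: act'_def S_def)
    next
      case False
      have "f (x, t) \<notin> \<Delta>'" using fdisj False x t by auto
      have x'nD: "x' \<notin> \<Delta>"
      proof
        assume x'D: "x' \<in> \<Delta>"
        then have "f (x, t) = h x'" using fh[of x' t'] x't' fe by (simp add: S_def)
        with \<open>f (x, t) \<notin> \<Delta>'\<close> DD' x'D show False by auto
      qed
      moreover have "(x', t') \<in> (D - \<Delta>) \<times> {0..1}" "(x, t) \<in> (D - \<Delta>) \<times> {0..1}"
        using x't' False x t x'nD by (auto simp: S_def)
      ultimately have "(x', t') = (x, t)" using inj_onD[OF finj fe] by blast
      then show ?thesis using e by (simp add: act'_def)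
    qed
  qed
  have fS: "f ` S = D'" using fim by (simp add: S_def)
  have cS: "compact S" using cD by (simp add: S_def compact_Times)
  have fcS: "continuous_on S f" using fc by (simp add: S_def)
  have Dpreim: "\<exists>x\<in>D. \<exists>t\<in>{0..1}. q = f (x, t)" if "q \<in> D'" for q
    using that fim by auto
  have D'f: "f (x, t) \<in> D'" if "x \<in> D" "t \<in> {0..1}" for x t using that fim by auto
  have h0: "h x = f (x, 0)" if "x \<in> \<Delta>" for x using fh that by simp
  have act'c: "continuous_on D' (act' g)" if g: "g \<in> carrier G" for g
  proof (rule quot_cont[OF cS fcS fS])
    have "continuous_on S (\<lambda>p. f (act g (fst p), snd p))"
      by (rule continuous_on_compose2[OF fcS])
        (auto intro!: continuous_intros continuous_on_compose2[OF actc[OF g]] simp: S_def actD[OF g])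
    then show "continuous_on S (\<lambda>x. act' g (f x))"
      by (rule continuous_on_eq) (auto simp: S_def key[OF g])
  qed
  have GA: "group_action_on G act' D'"
    unfolding group_action_on_def
  proof (intro conjI ballI)
    show "group G" by (rule grp)
    fix g assume g: "g \<in> carrier G"
    show "continuous_on D' (act' g)" by (rule act'c[OF g])
    show "act' g ` D' \<subseteq> D'"
    proof
      fix q assume "q \<in> act' g ` D'"
      then obtain q0 where q0: "q0 \<in> D'" "q = act' g q0" by blast
      then obtain x t where xt: "x \<in> D" "t \<in> {0..1}" "q0 = f (x, t)" using Dpreim by blast
      then have "q = f (act g x, t)" using key[OF g xt(1,2)] q0 by simp
      then show "q \<in> D'" using D'f[OF actD[OF g xt(1)] xt(2)] by simp
    qed
  next
    fix q assume "q \<in> D'"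
    then obtain x t where "x \<in> D" "t \<in> {0..1}" "q = f (x, t)" using Dpreim by blast
    then show "act' \<one>\<^bsub>G\<^esub> q = q" using key[of "\<one>\<^bsub>G\<^esub>"] act1 grp by (simp add: group.is_monoid monoid.one_closed)
  next
    fix g k q assume g: "g \<in> carrier G" and k: "k \<in> carrier G" and "q \<in> D'"
    then obtain x t where xt: "x \<in> D" "t \<in> {0..1}" "q = f (x, t)" using Dpreim by blast
    have gk: "g \<otimes>\<^bsub>G\<^esub> k \<in> carrier G" using grp g k by (simp add: group.is_monoid monoid.m_closed)
    show "act' (g \<otimes>\<^bsub>G\<^esub> k) q = act' g (act' k q)"
      using key[OF gk xt(1,2)] key[OF k xt(1,2)] key[OF g actD[OF k xt(1)] xt(2)] actm[OF g k xt(1)] xt(3)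
      by simp
  qed
  have hequiv: "\<forall>g\<in>carrier G. \<forall>x\<in>\<Delta>. h (act g x) = act' g (h x)"
  proof (intro ballI)
    fix g x assume g: "g \<in> carrier G" and x: "x \<in> \<Delta>"
    have "act g x \<in> \<Delta>" using inv g x by auto
    then have "h (act g x) = f (act g x, 0)" using h0 by simp
    also have "\<dots> = act' g (f (x, 0))" using key[OF g, of x 0] x DD by auto
    finally show "h (act g x) = act' g (h x)" using h0[OF x] by simp
  qed
  have inv': "\<forall>g\<in>carrier G. act' g ` \<Delta>' \<subseteq> \<Delta>'"
  proof (intro ballI subsetI)
    fix g q assume g: "g \<in> carrier G" and "q \<in> act' g ` \<Delta>'"
    then obtain x where x: "x \<in> \<Delta>" "q = act' g (h x)" using DD' by blast
    then have "q = h (act g x)" using hequiv g by simp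
    then show "q \<in> \<Delta>'" using inv g x DD' by auto
  qed
  have pd: "properly_discontinuous_on G act (D - \<Delta>)" and cc: "cocompact_on G act (D - \<Delta>)"
    and met: "\<And>K \<epsilon>. compact K \<Longrightarrow> K \<subseteq> D - \<Delta> \<Longrightarrow> \<epsilon> > 0 \<Longrightarrow>
        (\<exists>\<delta>>0. \<forall>g\<in>carrier G.
           (\<exists>x\<in>act g ` K. \<exists>y\<in>\<Delta>. dist x y < \<delta>) \<longrightarrow> diameter (act g ` K) < \<epsilon>)"
    using st by (auto simp: star_condition_def)
  have preK: "\<exists>K1. compact K1 \<and> K1 \<subseteq> D - \<Delta> \<and> (\<forall>q\<in>K'. \<exists>x\<in>K1. \<exists>t\<in>{0..1}. q = f (x, t))"
    if K': "compact K'" "K' \<subseteq> D' - \<Delta>'" for K'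
  proof -
    define F where "F = S \<inter> f -` K'"
    have "closedin (top_of_set S) F"
      unfolding F_def using continuous_on_imp_closedin[OF fcS] fS K'
      by (metis Diff_subset closed_subset compact_imp_closed order_trans)
    then have cF: "compact F" using closedin_compact[OF cS] by blast
    have "compact (fst ` F)" using cF by (intro compact_continuous_image continuous_intros)
    moreover have "fst ` F \<subseteq> D - \<Delta>"
    proof
      fix x assume "x \<in> fst ` F"
      then obtain t where xt: "(x, t) \<in> F" by force
      then have xD: "x \<in> D" and t: "t \<in> {0..1}" and fK: "f (x, t) \<in> K'" by (auto simp: F_def S_def)
      have "x \<notin> \<Delta>"
      proof
        assume xd: "x \<in> \<Delta>"
        then have "f (x, t) \<in> \<Delta>'" using fh[OF xd t] DD' by simp
        then show False using fK K' by blast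
      qed
      then show "x \<in> D - \<Delta>" using xD by simp
    qed
    moreover have "\<forall>q\<in>K'. \<exists>x\<in>fst ` F. \<exists>t\<in>{0..1}. q = f (x, t)"
    proof
      fix q assume "q \<in> K'"
      then have "q \<in> D'" using K' by blast
      then obtain x t where xt: "x \<in> D" "t \<in> {0..1}" "q = f (x, t)" using Dpreim by blast
      then have "(x, t) \<in> F" using \<open>q \<in> K'\<close> by (simp add: F_def S_def)
      then have "x \<in> fst ` F" by (metis fst_conv image_eqI)
      then show "\<exists>x\<in>fst ` F. \<exists>t\<in>{0..1}. q = f (x, t)" using xt(2,3) by blast
    qed
    ultimately show ?thesis by blast
  qed
  have PD: "properly_discontinuous_on G act' (D' - \<Delta>')"
    unfolding properly_discontinuous_on_def
  proof (intro allI impI)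
    fix K' assume K': "compact K' \<and> K' \<subseteq> D' - \<Delta>'"
    then obtain K1 where K1: "compact K1" "K1 \<subseteq> D - \<Delta>" "\<forall>q\<in>K'. \<exists>x\<in>K1. \<exists>t\<in>{0..1}. q = f (x, t)"
      using preK[of K'] K' by blast
    have fin: "finite {g \<in> carrier G. act g ` K1 \<inter> K1 \<noteq> {}}"
      using pd K1 by (auto simp: properly_discontinuous_on_def)
    have "{g \<in> carrier G. act' g ` K' \<inter> K' \<noteq> {}} \<subseteq> {g \<in> carrier G. act g ` K1 \<inter> K1 \<noteq> {}}"
    proof safe
      fix g k1 assume g: "g \<in> carrier G" and k1: "k1 \<in> K'" and k2: "act' g k1 \<in> K'"
        and e: "act g ` K1 \<inter> K1 = {}"
      obtain x1 t1 where x1: "x1 \<in> K1" "t1 \<in> {0..1}" "k1 = f (x1, t1)" using K1 k1 by blast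
      obtain x2 t2 where x2: "x2 \<in> K1" "t2 \<in> {0..1}" "act' g k1 = f (x2, t2)" using K1 k2 by blast
      have "f (act g x1, t1) = f (x2, t2)" using key[OF g _ x1(2), of x1] x1 x2 K1 by auto
      moreover have "act g x1 \<in> D - \<Delta>" using actDD[OF g] x1 K1 by auto
      moreover have "(x2, t2) \<in> (D - \<Delta>) \<times> {0..1}" using x2 K1 by auto
      ultimately have "act g x1 = x2" using inj_onD[OF finj] x1 by blast
      then show False using e x1 x2 by auto
    qed
    then show "finite {g \<in> carrier G. act' g ` K' \<inter> K' \<noteq> {}}" using fin finite_subset by blast
  qed
  have CC: "cocompact_on G act' (D' - \<Delta>')"
  proof -
    obtain K where K: "compact K" "K \<subseteq> D - \<Delta>" "D - \<Delta> \<subseteq> (\<Union>g\<in>carrier G. act g ` K)"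
      using cc by (auto simp: cocompact_on_def)
    have "compact (f ` (K \<times> {0..1}))" using K
      by (intro compact_continuous_image continuous_on_subset[OF fc]) (auto simp: compact_Times)
    moreover have "f ` (K \<times> {0..1}) \<subseteq> D' - \<Delta>'" using K fdisj D'f by auto
    moreover have "D' - \<Delta>' \<subseteq> (\<Union>g\<in>carrier G. act' g ` f ` (K \<times> {0..1}))"
    proof
      fix q assume q: "q \<in> D' - \<Delta>'"
      then obtain x t where xt: "x \<in> D" "t \<in> {0..1}" "q = f (x, t)" using Dpreim by blast
      have "x \<notin> \<Delta>"
      proof
        assume xd: "x \<in> \<Delta>"
        then have "q \<in> \<Delta>'" using fh[OF xd xt(2)] xt(3) DD' by simp
        then show False using q by blast
      qed
      then obtain g k where gk: "g \<in> carrier G" "k \<in> K" "x = act g k" using K xt by blast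
      have "q = act' g (f (k, t))" using key[OF gk(1) _ xt(2), of k] gk K xt by auto
      then show "q \<in> (\<Union>g\<in>carrier G. act' g ` f ` (K \<times> {0..1}))" using gk xt by blast
    qed
    ultimately show ?thesis unfolding cocompact_on_def by blast
  qed
  have MET: "\<exists>\<delta>>0. \<forall>g\<in>carrier G.
           (\<exists>x\<in>act' g ` K'. \<exists>y\<in>\<Delta>'. dist x y < \<delta>) \<longrightarrow> diameter (act' g ` K') < \<epsilon>"
    if K': "compact K'" "K' \<subseteq> D' - \<Delta>'" and ep: "\<epsilon> > 0" for K' \<epsilon>
  proof (cases "\<Delta> = {}")
    case True
    then show ?thesis using DD' by (auto intro!: exI[of _ 1])
  next
    case False
    obtain K1 where K1: "compact K1" "K1 \<subseteq> D - \<Delta>" "\<forall>q\<in>K'. \<exists>x\<in>K1. \<exists>t\<in>{0..1}. q = f (x, t)"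
      using preK[OF K'] by blast
    have "uniformly_continuous_on S f" by (rule compact_uniformly_continuous[OF fcS cS])
    then obtain \<eta> where eta: "\<eta> > 0" "\<And>p p'. p \<in> S \<Longrightarrow> p' \<in> S \<Longrightarrow> dist p' p < \<eta> \<Longrightarrow> dist (f p') (f p) < \<epsilon> / 4"
      unfolding uniformly_continuous_on_def using ep by (metis divide_pos_pos zero_less_numeral)
    obtain \<delta>1 where d1: "\<delta>1 > 0" "\<And>g. g \<in> carrier G \<Longrightarrow> (\<exists>x\<in>act g ` K1. \<exists>y\<in>\<Delta>. dist x y < \<delta>1) \<Longrightarrow> diameter (act g ` K1) < \<eta> / 2"
      using met[OF K1(1,2), of "\<eta> / 2"] eta by auto
    define \<delta>2 where "\<delta>2 = min \<delta>1 (\<eta> / 2)"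
    have d2: "\<delta>2 > 0" using d1 eta by (simp add: \<delta>2_def)
    define M where "M = S \<inter> {p. \<delta>2 \<le> infdist (fst p) \<Delta>}"
    have "closed {p. \<delta>2 \<le> infdist (fst p) \<Delta>}"
      by (intro closed_Collect_le continuous_intros)
    then have cM: "compact M" unfolding M_def by (rule compact_Int_closed[OF cS])
    have "M \<subseteq> S" by (simp add: M_def)
    then have cfM: "compact (f ` M)" using cM by (intro compact_continuous_image continuous_on_subset[OF fcS])
    have cD': "compact \<Delta>'"
    proof -
      have "\<Delta>' = f ` (\<Delta> \<times> {0..1})"
      proof
        show "\<Delta>' \<subseteq> f ` (\<Delta> \<times> {0..1})"
        proof
          fix q assume "q \<in> \<Delta>'"
          then obtain x where x: "x \<in> \<Delta>" "q = h x" using DD' by blast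
          then have "q = f (x, 0)" using fh[OF x(1)] by simp
          then show "q \<in> f ` (\<Delta> \<times> {0..1})" using x by force
        qed
        show "f ` (\<Delta> \<times> {0..1}) \<subseteq> \<Delta>'" using fh DD' by (auto simp del: atLeastAtMost_iff)
      qed
      moreover have "compact \<Delta>" using compact_Int_closed[OF cD clD] DD by (simp add: Int_absorb1)
      moreover have "\<Delta> \<times> {0..1} \<subseteq> D \<times> {0..1::real}" using DD by auto
      ultimately show ?thesis
        by (metis compact_Icc compact_Times compact_continuous_image continuous_on_subset fc)
    qed
    have disj: "f ` M \<inter> \<Delta>' = {}"
    proof -
      have "fst p \<notin> \<Delta>" if "p \<in> M" for p using that d2 by (auto simp: M_def)
      then have "f p \<notin> \<Delta>'" if "p \<in> M" for p
        using that fdisj[of "fst p" "snd p"] by (auto simp: M_def S_def mem_Times_iff)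
      then show ?thesis by blast
    qed
    obtain \<delta> where dl: "\<delta> > 0" "\<And>u y. u \<in> f ` M \<Longrightarrow> y \<in> \<Delta>' \<Longrightarrow> \<delta> \<le> dist u y"
      using separate_compact_closed[OF cfM compact_imp_closed[OF cD'] disj] by blast
    show ?thesis
    proof (intro exI[of _ \<delta>] conjI dl(1) ballI impI)
      fix g assume g: "g \<in> carrier G" and "\<exists>x\<in>act' g ` K'. \<exists>y\<in>\<Delta>'. dist x y < \<delta>"
      then obtain k y where k: "k \<in> K'" and y: "y \<in> \<Delta>'" and dk: "dist (act' g k) y < \<delta>" by blast
      obtain x t where xt: "x \<in> K1" "t \<in> {0..1}" "k = f (x, t)" using K1 k by blast
      have xD: "x \<in> D" using xt K1 by auto
      have ak: "act' g k = f (act g x, t)" using key[OF g xD xt(2)] xt by simp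
      have "(act g x, t) \<notin> M"
        using dl(2)[of "f (act g x, t)" y] dk ak y by force
      then have "infdist (act g x) \<Delta> < \<delta>2" using actD[OF g xD] xt by (auto simp: M_def S_def)
      then obtain y0 where y0: "y0 \<in> \<Delta>" "dist (act g x) y0 < \<delta>2" using infdist_lessE False by blast
      have diam: "diameter (act g ` K1) < \<eta> / 2"
        using d1(2)[OF g] xt y0 by (force simp: \<delta>2_def)
      have bK: "bounded (act g ` K1)"
        using K1 actc[OF g] compact_continuous_image continuous_on_subset compact_imp_bounded
        by (metis Diff_subset order_trans)
      have close: "dist p (h y0) < \<epsilon> / 4" if pK: "p \<in> act' g ` K'" for p
      proof -
        obtain k' where k': "k' \<in> K'" "p = act' g k'" using pK by blast
        obtain x' t' where xt': "x' \<in> K1" "t' \<in> {0..1}" "k' = f (x', t')" using K1 k' by blast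
        have x'D: "x' \<in> D" using xt' K1 by auto
        have p: "p = f (act g x', t')" using key[OF g x'D xt'(2)] xt' k' by simp
        have "dist (act g x') (act g x) \<le> diameter (act g ` K1)"
          using diameter_bounded_bound[OF bK] xt' xt by blast
        then have "dist (act g x') y0 < \<eta>"
          using dist_triangle[of "act g x'" y0 "act g x"] y0 diam by (simp add: \<delta>2_def)
        then have "dist (act g x', t') (y0, t') < \<eta>" by (simp add: dist_Pair_Pair)
        then have "dist (f (act g x', t')) (f (y0, t')) < \<epsilon> / 4"
          using eta(2)[of "(y0, t')" "(act g x', t')"] actD[OF g x'D] y0 DD xt' by (auto simp: S_def)
        then show ?thesis using p fh[OF y0(1) xt'(2)] by simp
      qed
      have "diameter (act' g ` K') \<le> \<epsilon> / 2"
      proof (rule diameter_le)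
        show "act' g ` K' \<noteq> {} \<or> 0 \<le> \<epsilon> / 2" using ep by simp
        fix u v assume "u \<in> act' g ` K'" "v \<in> act' g ` K'"
        then have "dist u (h y0) < \<epsilon> / 4" "dist v (h y0) < \<epsilon> / 4" using close by auto
        then have "dist u v < \<epsilon> / 2" using dist_triangle3[of u v "h y0"] by (simp add: dist_commute)
        then show "norm (u - v) \<le> \<epsilon> / 2" by (simp add: dist_norm)
      qed
      then show "diameter (act' g ` K') < \<epsilon>" using ep by simp
    qed
  qed
  have SC: "star_condition G act' D' \<Delta>'"
    unfolding star_condition_def
  proof (intro conjI PD CC allI impI)
    fix K and \<epsilon> :: real assume a: "compact K \<and> K \<subseteq> D' - \<Delta>' \<and> 0 < \<epsilon>"
    show "\<exists>\<delta>>0. \<forall>g\<in>carrier G. (\<exists>x\<in>act' g ` K. \<exists>y\<in>\<Delta>'. dist x y < \<delta>) \<longrightarrow> diameter (act' g ` K) < \<epsilon>"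
      using MET[of K \<epsilon>] a by blast
  qed
  have KEY: "\<forall>g\<in>carrier G. \<forall>x\<in>D. \<forall>t\<in>{0..1}. f (act g x, t) = act' g (f (x, t))"
    using key by simp
  show ?thesis
    by (rule exI[of _ act']) (intro conjI GA inv' SC hequiv KEY)
qed


theorem lemma3p1:
  fixes G :: "('g, 'm) monoid_scheme"
    and act :: "'g \<Rightarrow> 'a::euclidean_space \<Rightarrow> 'a"
    and \<Delta> :: "'a set"
  assumes "group_action_on G act (cball 0 1)"
    and "closed \<Delta>" and "\<Delta> \<subseteq> sphere 0 1"
    and "\<forall>g\<in>carrier G. act g ` \<Delta> \<subseteq> \<Delta>"
    and "star_condition G act (cball 0 1) \<Delta>"
  shows "\<exists>(act' :: 'g \<Rightarrow> 'a \<times> real \<Rightarrow> 'a \<times> real) \<Delta>' (h :: 'a \<Rightarrow> 'a \<times> real) (f :: 'a \<times> real \<Rightarrow> 'a \<times> real).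
           group_action_on G act' (cball 0 1) \<and>
           closed \<Delta>' \<and> \<Delta>' \<subseteq> sphere 0 1 \<and>
           (\<forall>g\<in>carrier G. act' g ` \<Delta>' \<subseteq> \<Delta>') \<and>
           star_condition G act' (cball 0 1) \<Delta>' \<and>
           (\<exists>h'. homeomorphism \<Delta> \<Delta>' h h') \<and>
           (\<forall>g\<in>carrier G. \<forall>x\<in>\<Delta>. h (act g x) = act' g (h x)) \<and>
           continuous_on (cball 0 1 \<times> {0..1}) f \<and>
           f ` (cball 0 1 \<times> {0..1}) = cball 0 1 \<and>
           (\<forall>g\<in>carrier G. \<forall>x\<in>cball 0 1. \<forall>t\<in>{0..1}. f (act g x, t) = act' g (f (x, t))) \<and>
           f ` (\<Delta> \<times> {0..1}) \<subseteq> \<Delta>' \<and>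
           (\<exists>f'. homeomorphism ((cball 0 1 - \<Delta>) \<times> {0..1}) (cball 0 1 - \<Delta>') f f')"
proof -
  note ga = assms(1) and clD = assms(2) and sph = assms(3) and inv = assms(4) and st = assms(5)
  define h :: "'a \<Rightarrow> 'a \<times> real" where "h y = (y, 0)" for y
  define \<Delta>' where "\<Delta>' = h ` \<Delta>"
  define F where "F = ff \<Delta>"
  have DD: "\<Delta> \<subseteq> cball 0 1" using sph by auto
  have cD: "compact (cball (0::'a) 1)" by simp
  have fc: "continuous_on (cball 0 1 \<times> {0..1}) F" unfolding F_def by (rule ff_cont)
  have fh: "F (x, t) = h x" if "x \<in> \<Delta>" for x t
    using ff_D[OF sph that] by (simp add: F_def h_def)
  have fim: "F ` (cball 0 1 \<times> {0..1}) = cball 0 1"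
  proof
    show "F ` (cball 0 1 \<times> {0..1}) \<subseteq> cball 0 1"
      using ff_in by (force simp: F_def)
    show "cball 0 1 \<subseteq> F ` (cball 0 1 \<times> {0..1})"
    proof
      fix q :: "'a \<times> real" assume q: "q \<in> cball 0 1"
      show "q \<in> F ` (cball 0 1 \<times> {0..1})"
      proof (cases "q \<in> \<Delta>'")
        case True
        then obtain y where y: "y \<in> \<Delta>" "q = (y, 0)" by (auto simp: \<Delta>'_def h_def)
        then have "q = F (y, 0)" using fh by (simp add: h_def)
        moreover have "(y, 0) \<in> cball 0 1 \<times> {0..1::real}" using y DD by auto
        ultimately show ?thesis by blast
      next
        case False
        then have "q \<notin> (\<lambda>y. (y, 0)) ` \<Delta>" by (simp add: \<Delta>'_def h_def)
        then have r: "fst (fi \<Delta> q) \<notin> \<Delta> \<and> norm (fst (fi \<Delta> q)) \<le> 1 \<and> snd (fi \<Delta> q) \<in> {0..1} \<and> ff \<Delta> (fi \<Delta> q) = q"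
          using ff_fi[OF clD sph] q by simp
        then have "fi \<Delta> q \<in> cball 0 1 \<times> {0..1}" by (simp add: mem_Times_iff)
        then show ?thesis using r by (metis F_def image_eqI)
      qed
    qed
  qed
  have hinj: "inj_on h \<Delta>" by (simp add: h_def inj_on_def)
  have finj: "inj_on F ((cball 0 1 - \<Delta>) \<times> {0..1})"
  proof (rule inj_on_inverseI[where g = "fi \<Delta>"])
    fix p assume "p \<in> (cball 0 1 - \<Delta>) \<times> {0..1::real}"
    then obtain x t where "p = (x, t)" "norm x \<le> 1" "x \<notin> \<Delta>" "0 \<le> t" "t \<le> 1" by auto
    then show "fi \<Delta> (F p) = p" using fi_ff[OF clD sph] by (simp add: F_def)
  qed
  have fdisj: "F (x, t) \<notin> \<Delta>'" if "x \<in> cball 0 1 - \<Delta>" "t \<in> {0..1}" for x t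
    using ff_notDl[OF clD sph, of x t] that by (simp add: F_def \<Delta>'_def h_def)
  obtain act' where A: "group_action_on G act' (cball 0 1)" "\<forall>g\<in>carrier G. act' g ` \<Delta>' \<subseteq> \<Delta>'"
     "star_condition G act' (cball 0 1) \<Delta>'" "\<forall>g\<in>carrier G. \<forall>x\<in>\<Delta>. h (act g x) = act' g (h x)"
     "\<forall>g\<in>carrier G. \<forall>x\<in>cball 0 1. \<forall>t\<in>{0..1}. F (act g x, t) = act' g (F (x, t))"
    using transfer[OF ga cD clD DD inv st fc fim fh hinj \<Delta>'_def finj fdisj] by blast
  have cDl: "compact \<Delta>" using compact_Int_closed[OF cD clD] DD by (simp add: Int_absorb1 Int_absorb2)
  have hc: "continuous_on S h" for S unfolding h_def by (intro continuous_intros)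
  have clD': "closed \<Delta>'" unfolding \<Delta>'_def
    by (intro compact_imp_closed compact_continuous_image hc cDl)
  have sD': "\<Delta>' \<subseteq> sphere 0 1" using sph by (auto simp: \<Delta>'_def h_def)
  have hom: "homeomorphism \<Delta> \<Delta>' h fst"
    unfolding homeomorphism_def by (auto simp: \<Delta>'_def h_def image_image intro: hc continuous_intros)
  have fD: "F ` (\<Delta> \<times> {0..1}) \<subseteq> \<Delta>'" using fh by (auto simp: \<Delta>'_def)
  have "\<exists>f'. homeomorphism ((cball 0 1 - \<Delta>) \<times> {0..1}) (cball 0 1 - \<Delta>') F f'"
  proof (rule homeo_part[OF compact_Times[OF cD compact_Icc] fc fim])
    show "(cball 0 1 - \<Delta>) \<times> {0..1} \<subseteq> cball 0 1 \<times> {0..1::real}" by auto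
    show "inj_on F ((cball 0 1 - \<Delta>) \<times> {0..1})" by (rule finj)
    show "F ` (cball 0 1 \<times> {0..1} - (cball 0 1 - \<Delta>) \<times> {0..1}) \<subseteq> \<Delta>'"
      using fD by auto
    show "F ` ((cball 0 1 - \<Delta>) \<times> {0..1}) \<inter> \<Delta>' = {}" using fdisj by auto
  qed
  then show ?thesis
    using A clD' sD' hom fc fim fD by blast
qed

end
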